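(* Let $k$ be a field, $r \ge 1$, $s \le r$, and $x_1,\dots,x_r \in k$. For $1 \le j \le r$ and $d \ge 0$, let $e^d_{r,j}$ be the elementary symmetric polynomial of degree $d$ in the $r-1$ variables $x_1,\dots,x_r$ with $x_j$ omitted, and let $A_r^s(x_1,\dots,x_r)$ be the $s \times r$ matrix whose $(d+1,j)$ entry is $e^d_{r,j}(x_1,\dots,x_r)$ for $0 \le d \le s-1$, $1 \le j \le r$. Then $A_r^s(x_1,\dots,x_r)$ has full rank (rank $s$) if and only if $\#\{x_1,\dots,x_r\} \ge s$. *)

theory Defs
  imports "Jordan_Normal_Form.DL_Rank"
begin

definition esym_val :: "nat \<Rightarrow> nat set \<Rightarrow> (nat \<Rightarrow> 'k::field) \<Rightarrow> 'k" where
  "esym_val d I x = (\<Sum>S \<in> {S. S \<subseteq> I \<and> card S = d}. \<Prod>i\<in>S. x i)"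

text \<open>The s x r matrix A_r^s(x_1..x_r); variables indexed 1..r, matrix entries 0-based:
  entry (d, j-1) = e^d_{r,j} = esym of degree d in the x_i with i in {1..r}-{j}.\<close>
definition A_mat :: "nat \<Rightarrow> nat \<Rightarrow> (nat \<Rightarrow> 'k::field) \<Rightarrow> 'k mat" where
  "A_mat r s x = mat s r (\<lambda>(d, j). esym_val d ({1..r} - {j + 1}) x)"

end

theory Submission
  imports Defs "HOL-Computational_Algebra.Polynomial" "Jordan_Normal_Form.DL_Rank_Submatrix"
begin

lemma esym_zero: assumes "finite I" shows "esym_val 0 I x = 1"
proof -
  have "{S. S \<subseteq> I \<and> card S = 0} = {{}}" using assms by (auto dest: finite_subset)
  then show ?thesis unfolding esym_val_def by simp
qed

lemma esym_insert:
  assumes "finite I" "j \<notin> I"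
  shows "esym_val (Suc n) (insert j I) x = esym_val (Suc n) I x + x j * esym_val n I x"
proof -
  have eq: "{S. S \<subseteq> insert j I \<and> card S = Suc n} =
     {S. S \<subseteq> I \<and> card S = Suc n} \<union> insert j ` {S. S \<subseteq> I \<and> card S = n}"
  proof (rule equalityI; rule subsetI)
    fix S assume "S \<in> {S. S \<subseteq> insert j I \<and> card S = Suc n}"
    then have S: "S \<subseteq> insert j I" "card S = Suc n" by auto
    show "S \<in> {S. S \<subseteq> I \<and> card S = Suc n} \<union> insert j ` {S. S \<subseteq> I \<and> card S = n}"
    proof (cases "j \<in> S")
      case True
      have fS: "finite S" using S assms finite_subset by blast
      have "S = insert j (S - {j})" using True by auto
      moreover have "S - {j} \<subseteq> I" "card (S - {j}) = n" using S True fS by auto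
      ultimately show ?thesis by blast
    next
      case False then show ?thesis using S by auto
    qed
  next
    fix S assume "S \<in> {S. S \<subseteq> I \<and> card S = Suc n} \<union> insert j ` {S. S \<subseteq> I \<and> card S = n}"
    then show "S \<in> {S. S \<subseteq> insert j I \<and> card S = Suc n}"
    proof
      assume "S \<in> insert j ` {S. S \<subseteq> I \<and> card S = n}"
      then obtain T where "T \<subseteq> I" "card T = n" "S = insert j T" by auto
      then show ?thesis using assms by (auto simp: finite_subset card_insert_if)
    qed auto
  qed
  have fin1: "finite {S. S \<subseteq> I \<and> card S = Suc n}" using assms by simp
  have fin2: "finite (insert j ` {S. S \<subseteq> I \<and> card S = n})" using assms by simp
  have disj: "{S. S \<subseteq> I \<and> card S = Suc n} \<inter> insert j ` {S. S \<subseteq> I \<and> card S = n} = {}"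
    using assms by auto
  have inj: "inj_on (insert j) {S. S \<subseteq> I \<and> card S = n}"
    unfolding inj_on_def using assms by (metis Diff_insert_absorb mem_Collect_eq subset_iff)
  have "esym_val (Suc n) (insert j I) x = esym_val (Suc n) I x
      + (\<Sum>S \<in> insert j ` {S. S \<subseteq> I \<and> card S = n}. \<Prod>i\<in>S. x i)"
    unfolding esym_val_def eq by (rule sum.union_disjoint[OF fin1 fin2 disj])
  also have "(\<Sum>S \<in> insert j ` {S. S \<subseteq> I \<and> card S = n}. \<Prod>i\<in>S. x i)
      = (\<Sum>S \<in> {S. S \<subseteq> I \<and> card S = n}. \<Prod>i\<in>insert j S. x i)"
    by (simp add: sum.reindex[OF inj])
  also have "\<dots> = (\<Sum>S \<in> {S. S \<subseteq> I \<and> card S = n}. x j * (\<Prod>i\<in>S. x i))"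
    by (rule sum.cong, simp, subst prod.insert) (use assms in \<open>auto dest: finite_subset\<close>)
  also have "\<dots> = x j * esym_val n I x" unfolding esym_val_def by (simp add: sum_distrib_left)
  finally show ?thesis .
qed

lemma esym_remove:
  assumes "finite I" "j \<in> I"
  shows "esym_val d (I - {j}) x = (\<Sum>k\<le>d. esym_val (d-k) I x * (- x j)^k)"
proof (induction d)
  case 0 then show ?case using assms by (simp add: esym_zero)
next
  case (Suc d)
  have I: "I = insert j (I - {j})" using assms by auto
  have "esym_val (Suc d) I x = esym_val (Suc d) (I - {j}) x + x j * esym_val d (I - {j}) x"
    using esym_insert[of "I - {j}" j d x] assms I by simp
  then have "esym_val (Suc d) (I - {j}) x = esym_val (Suc d) I x - x j * esym_val d (I - {j}) x"
    by (simp add: algebra_simps)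
  also have "\<dots> = esym_val (Suc d) I x + (\<Sum>k\<le>d. esym_val (d-k) I x * (- x j)^Suc k)"
  proof -
    have "(\<Sum>k\<le>d. esym_val (d-k) I x * (- x j)^Suc k) = (- x j) * (\<Sum>k\<le>d. esym_val (d-k) I x * (- x j)^k)"
      by (simp add: sum_distrib_left mult_ac)
    then show ?thesis unfolding Suc by simp
  qed
  also have "\<dots> = (\<Sum>k\<le>Suc d. esym_val (Suc d-k) I x * (- x j)^k)"
    by (subst sum.atMost_Suc_shift) simp
  finally show ?case .
qed


lemma rank_le_nr:
  assumes "(A :: 'a :: field mat) \<in> carrier_mat n nc"
  shows "vec_space.rank n A \<le> n"
proof -
  interpret vec_space "TYPE('a)" n .
  have sc: "set (cols A) \<subseteq> carrier_vec n" using assms cols_dim by blast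
  show ?thesis unfolding rank_def
    using subspace_dim[OF span_is_subspace[OF sc] fin_dim fin_dim_span_cols[OF assms]] dim_is_n
    by simp
qed

lemma rank_le_card_cols:
  assumes "(A :: 'a :: field mat) \<in> carrier_mat n nc"
  shows "vec_space.rank n A \<le> card (set (cols A))"
proof -
  interpret vec_space "TYPE('a)" n .
  obtain S where "maximal S (\<lambda>T. T \<subseteq> set (cols A) \<and> lin_indpt T)"
    using maximal_exists[of "(\<lambda>T. T \<subseteq> set (cols A) \<and> lin_indpt T)" "card (set (cols A))" "{}"]
    by (meson List.finite_set card_mono empty_iff empty_subsetI finite_lin_indpt2 rev_finite_subset)
  then have "card S \<le> card (set (cols A))" by (simp add: card_mono maximal_def)
  then show ?thesis
    using rank_card_indpt[OF assms \<open>maximal S (\<lambda>T. T \<subseteq> set (cols A) \<and> lin_indpt T)\<close>]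
    by simp
qed

lemma A_entry:
  assumes "d < s" "j < r"
  shows "A_mat r s x $$ (d, j) = (\<Sum>k\<le>d. esym_val (d-k) {1..r} x * (- x (Suc j))^k)"
  using assms esym_remove[of "{1..r}" "Suc j" d x] unfolding A_mat_def by simp

lemma vandermonde_det_nz:
  fixes y :: "nat \<Rightarrow> 'k::field"
  assumes inj: "inj_on y {..<s}"
  shows "det (mat s s (\<lambda>(k,a). y a ^ k)) \<noteq> 0"
proof
  let ?V = "mat s s (\<lambda>(k,a). y a ^ k)"
  assume "det ?V = 0"
  then have "det (transpose_mat ?V) = 0" using det_transpose[of ?V s] by simp
  then obtain v where v: "v \<in> carrier_vec s" "v \<noteq> 0\<^sub>v s" "transpose_mat ?V *\<^sub>v v = 0\<^sub>v s"
    using det_0_iff_vec_prod_zero_field[of "transpose_mat ?V" s] by auto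
  obtain k0 where k0: "k0 < s" "v $ k0 \<noteq> 0" using v(1,2) by (metis carrier_vecD eq_vecI index_zero_vec(1,2))
  define p where "p = (\<Sum>k<s. monom (v $ k) k)"
  have coeff: "coeff p i = (if i < s then v $ i else 0)" for i
    unfolding p_def coeff_sum coeff_monom by (auto simp: sum.delta)
  have "p \<noteq> 0" using coeff[of k0] k0 by auto
  have deg: "degree p \<le> s - 1"
    by (rule degree_le) (auto simp: coeff)
  have root: "poly p (y a) = 0" if "a < s" for a
  proof -
    have "(transpose_mat ?V *\<^sub>v v) $ a = 0" using v(3) that by simp
    then have "(\<Sum>k<s. y a ^ k * v $ k) = 0"
      using that v(1) by (simp add: mult_mat_vec_def scalar_prod_def row_def atLeast0LessThan)
    then show ?thesis unfolding p_def poly_sum poly_monom by (simp add: mult.commute)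
  qed
  have "y ` {..<s} \<subseteq> {z. poly p z = 0}" using root by auto
  then have "card (y ` {..<s}) \<le> card {z. poly p z = 0}"
    using poly_roots_finite[OF \<open>p \<noteq> 0\<close>] by (rule card_mono[rotated])
  then have "s \<le> degree p" using card_image[OF inj] card_poly_roots_bound[OF \<open>p \<noteq> 0\<close>] by simp
  then show False using deg k0 by simp
qed

theorem corollary2p4:
  fixes x :: "nat \<Rightarrow> 'k::field" and r s :: nat
  assumes "r \<ge> 1" and "s \<le> r"
  shows "vec_space.rank s (A_mat r s x) = s \<longleftrightarrow> card (x ` {1..r}) \<ge> s"
proof -
  define A where "A = A_mat r s x"
  define E where "E m = esym_val m {1..r} x" for m
  have Ac: "A \<in> carrier_mat s r" unfolding A_def A_mat_def by simp
  have entry: "A $$ (d, j) = (\<Sum>k\<le>d. E (d-k) * (- x (Suc j))^k)" if "d < s" "j < r" for d j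
    unfolding A_def E_def using A_entry[OF that] .
  have img: "x ` {1..r} = (\<lambda>j. x (Suc j)) ` {..<r}"
  proof -
    have "{1..r} = Suc ` {..<r}" by (auto simp: image_iff) (metis Suc_pred' atMost_iff le_simps(3) lessThan_iff not_less_eq_eq)
    then show ?thesis by (simp add: image_image)
  qed
  show ?thesis
  proof
    assume rk: "vec_space.rank s (A_mat r s x) = s"
    define F where "F v = vec s (\<lambda>d. \<Sum>k\<le>d. E (d-k) * (- v)^k)" for v
    have "set (cols A) \<subseteq> F ` (x ` {1..r})"
    proof
      fix c assume "c \<in> set (cols A)"
      then obtain j where j: "j < r" "c = col A j" using Ac
        by (metis carrier_matD(2) cols_length cols_nth in_set_conv_nth)
      have "c = F (x (Suc j))" unfolding j F_def
        by (rule eq_vecI) (use Ac j entry in auto)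
      then show "c \<in> F ` (x ` {1..r})" using img j by auto
    qed
    then have "card (set (cols A)) \<le> card (F ` (x ` {1..r}))" by (rule card_mono[rotated]) simp
    also have "\<dots> \<le> card (x ` {1..r})" by (rule card_image_le) simp
    finally show "card (x ` {1..r}) \<ge> s" using rank_le_card_cols[OF Ac] rk unfolding A_def by simp
  next
    assume cs: "card (x ` {1..r}) \<ge> s"
    obtain S where S: "S \<subseteq> x ` {1..r}" "card S = s" using obtain_subset_with_card_n[OF cs] by blast
    then obtain J where J: "J \<subseteq> {..<r}" "inj_on (\<lambda>j. x (Suc j)) J" "S = (\<lambda>j. x (Suc j)) ` J"
      using subset_image_inj[of S "\<lambda>j. x (Suc j)" "{..<r}"] img by auto
    have cJ: "card J = s" using S J card_image by metis
    have cJ': "card {j. j < r \<and> j \<in> J} = s" using J cJ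
      by (metis (no_types, lifting) Collect_cong Collect_mem_eq lessThan_iff subsetD)
    have cI: "card {i. i < s \<and> i \<in> (UNIV::nat set)} = s" by simp
    define y where "y a = - x (Suc (pick J a))" for a
    have pJ: "pick J a \<in> J" if "a < s" for a using pick_in_set[of a J] that cJ by simp
    have injy: "inj_on y {..<s}"
    proof (rule inj_onI)
      fix a b assume ab: "a \<in> {..<s}" "b \<in> {..<s}" "y a = y b"
      then have "pick J a = pick J b" using J(2) pJ unfolding y_def inj_on_def by simp
      then show "a = b" using ab pick_mono[of _ J] cJ
        by (metis lessThan_iff linorder_neqE_nat less_irrefl)
    qed
    define T where "T = mat s s (\<lambda>(d,k). if k \<le> d then E (d-k) else 0)"
    define V where "V = mat s s (\<lambda>(k,a). y a ^ k)"
    have sub: "submatrix A UNIV J = T * V"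
    proof (rule eq_matI)
      show "dim_row (submatrix A UNIV J) = dim_row (T * V)" using Ac cI by (simp add: dim_submatrix T_def)
      show "dim_col (submatrix A UNIV J) = dim_col (T * V)" using Ac cJ' by (simp add: dim_submatrix V_def)
      fix d a assume da: "d < dim_row (T * V)" "a < dim_col (T * V)"
      then have d: "d < s" and a: "a < s" by (auto simp: T_def V_def)
      have pr: "pick J a < r" using pJ[OF a] J(1) by auto
      have "submatrix A UNIV J $$ (d, a) = A $$ (d, pick J a)"
        unfolding submatrix_def using Ac cI cJ' d a by (simp add: pick_UNIV)
      also have "\<dots> = (\<Sum>k\<le>d. E (d-k) * y a ^ k)" using entry[OF d pr] unfolding y_def by simp
      also have "\<dots> = (\<Sum>k\<in>{..<s}. (if k \<le> d then E (d-k) else 0) * y a ^ k)"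
      proof -
        have "(\<Sum>k\<in>{..<s}. (if k \<le> d then E (d-k) else 0) * y a ^ k)
            = (\<Sum>k\<in>{..<s}. if k \<in> {..d} then E (d-k) * y a ^ k else 0)"
          by (rule sum.cong) auto
        also have "\<dots> = (\<Sum>k\<in>{..<s} \<inter> {..d}. E (d-k) * y a ^ k)"
          by (rule sum.inter_restrict[symmetric]) simp
        also have "{..<s} \<inter> {..d} = {..d}" using d by auto
        finally show ?thesis by simp
      qed
      also have "\<dots> = (T * V) $$ (d, a)"
        using d a by (simp add: T_def V_def scalar_prod_def row_def col_def atLeast0LessThan)
      finally show "submatrix A UNIV J $$ (d, a) = (T * V) $$ (d, a)" .
    qed
    have detT: "det T = 1"
    proof -
      have "det T = prod_list (diag_mat T)"
        by (rule det_lower_triangular[of s]) (auto simp: T_def)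
      also have "\<dots> = 1" unfolding prod_list_diag_prod
        by (rule prod.neutral) (auto simp: T_def E_def esym_zero)
      finally show ?thesis .
    qed
    have "det (submatrix A UNIV J) \<noteq> 0"
      unfolding sub using det_mult[of T s V] detT vandermonde_det_nz[OF injy]
      by (simp add: T_def V_def)
    then have "card {j. j < r \<and> j \<in> J} \<le> vec_space.rank s A"
      using vec_space.rank_gt_minor[OF Ac] by blast
    then show "vec_space.rank s (A_mat r s x) = s"
      using cJ' rank_le_nr[OF Ac] unfolding A_def by simp
  qed
qed

end
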